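(* $\beta^c_1<\sqrt{3/2}<\beta^c_0$.
   Context: $\mathbb{N}=\{0,1,2,\dots\}$. For $t\ge 0$ let $q(t)=\lfloor t+1\rfloor/2$ if $\lfloor t\rfloor$ is odd and $q(t)=t-\lfloor t\rfloor/2$ if $\lfloor t\rfloor$ is even, and $p(t)=t+1-q(t)$. For $\beta\ge1$ let $\hat\sigma(t,\beta)\in(0,1)$ be the unique solution $\sigma$ of $\frac{p(t)\sigma}{\sqrt{1-\sigma^2}}+\frac{q(t)\sigma}{\sqrt{\beta^2-\sigma^2}}=1$, and $l(t,\beta)=\frac{p(t)}{\sqrt{1-\hat\sigma^2}}+\frac{\beta^2q(t)}{\sqrt{\beta^2-\hat\sigma^2}}-t-\sqrt2$. For $k\in\mathbb{N}$, $\delta(k,\beta)=l(2k+2,\beta)-l(2k,\beta)$, and $\beta^c_k$ is the unique number in $(1,\sqrt2)$ with $\delta(k,\beta^c_k)=0$ (well defined since $\beta\mapsto\delta(k,\beta)$ is strictly increasing on $[1,\infty)$ with $\delta(k,1)<0<\delta(k,\sqrt2)$). *)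

theory Defs
  imports "HOL-Analysis.Analysis"
begin

definition q_fun :: "real \<Rightarrow> real" where
  "q_fun t = (if odd \<lfloor>t\<rfloor> then real_of_int \<lfloor>t + 1\<rfloor> / 2
              else t - real_of_int \<lfloor>t\<rfloor> / 2)"

definition p_fun :: "real \<Rightarrow> real" where
  "p_fun t = t + 1 - q_fun t"

definition sigma_hat :: "real \<Rightarrow> real \<Rightarrow> real" where
  "sigma_hat t \<beta> = (THE \<sigma>. 0 < \<sigma> \<and> \<sigma> < 1 \<and>
      p_fun t * \<sigma> / sqrt (1 - \<sigma>\<^sup>2) + q_fun t * \<sigma> / sqrt (\<beta>\<^sup>2 - \<sigma>\<^sup>2) = 1)"

definition l_fun :: "real \<Rightarrow> real \<Rightarrow> real" where
  "l_fun t \<beta> = p_fun t / sqrt (1 - (sigma_hat t \<beta>)\<^sup>2)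
      + \<beta>\<^sup>2 * q_fun t / sqrt (\<beta>\<^sup>2 - (sigma_hat t \<beta>)\<^sup>2) - t - sqrt 2"

definition delta_fun :: "nat \<Rightarrow> real \<Rightarrow> real" where
  "delta_fun k \<beta> = l_fun (2 * real k + 2) \<beta> - l_fun (2 * real k) \<beta>"

definition beta_c :: "nat \<Rightarrow> real" where
  "beta_c k = (THE \<beta>. 1 < \<beta> \<and> \<beta> < sqrt 2 \<and> delta_fun k \<beta> = 0)"

end

theory Submission imports Defs begin

definition hh :: "real \<Rightarrow> real \<Rightarrow> real \<Rightarrow> real \<Rightarrow> real" where
  "hh p q b s = p * s / sqrt (1 - s\<^sup>2) + q * s / sqrt (b\<^sup>2 - s\<^sup>2)"
definition Fp :: "real \<Rightarrow> real \<Rightarrow> real \<Rightarrow> real \<Rightarrow> real" where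
  "Fp p q b s = s + p * sqrt (1 - s\<^sup>2) + q * sqrt (b\<^sup>2 - s\<^sup>2)"
definition Cc :: "real \<Rightarrow> real \<Rightarrow> real \<Rightarrow> real \<Rightarrow> real" where
  "Cc p q b s = p / sqrt (1 - s\<^sup>2) + b\<^sup>2 * q / sqrt (b\<^sup>2 - s\<^sup>2)"
definition sh :: "real \<Rightarrow> real \<Rightarrow> real \<Rightarrow> real" where
  "sh p q b = (THE \<sigma>. 0 < \<sigma> \<and> \<sigma> < 1 \<and>
      p * \<sigma> / sqrt (1 - \<sigma>\<^sup>2) + q * \<sigma> / sqrt (b\<^sup>2 - \<sigma>\<^sup>2) = 1)"

lemma frac_mono:
  assumes a: "a \<ge> 1" and x: "0 \<le> x" "x < y" "y < 1"
  shows "x / sqrt (a - x\<^sup>2) < y / sqrt (a - y\<^sup>2)"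
proof -
  have y2: "y\<^sup>2 < 1" using x by (simp add: power_less_one_iff abs_less_iff) 
  have xy: "x\<^sup>2 \<le> y\<^sup>2" using x by (intro power_mono) auto
  have p1: "sqrt (a - y\<^sup>2) > 0" using y2 a by simp
  have p2: "sqrt (a - x\<^sup>2) > 0" using xy y2 a by simp
  have le: "sqrt (a - y\<^sup>2) \<le> sqrt (a - x\<^sup>2)" using xy by simp
  have "x * sqrt (a - y\<^sup>2) \<le> x * sqrt (a - x\<^sup>2)" using le x by (simp add: mult_left_mono)
  also have "\<dots> < y * sqrt (a - x\<^sup>2)" using p2 x by simp
  finally show ?thesis using p1 p2 by (simp add: divide_simps)
qed

lemma frac_mono_le:
  assumes a: "a \<ge> 1" and x: "0 \<le> x" "x \<le> y" "y < 1"
  shows "x / sqrt (a - x\<^sup>2) \<le> y / sqrt (a - y\<^sup>2)"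
  using frac_mono[OF a x(1) _ x(3)] x(2) by (cases "x = y") auto

lemma hh_mono:
  assumes "p > 0" "q \<ge> 0" "b \<ge> 1" "0 \<le> x" "x < y" "y < 1"
  shows "hh p q b x < hh p q b y"
proof -
  have b2: "b\<^sup>2 \<ge> 1" using assms(3) by (metis one_le_power)
  have "x / sqrt (1 - x\<^sup>2) < y / sqrt (1 - y\<^sup>2)" using frac_mono[of 1 x y] assms by simp
  hence A: "p * x / sqrt (1 - x\<^sup>2) < p * y / sqrt (1 - y\<^sup>2)" using assms(1)
    by (simp add: mult_strict_left_mono times_divide_eq_right[symmetric] del: times_divide_eq_right)
  have "x / sqrt (b\<^sup>2 - x\<^sup>2) \<le> y / sqrt (b\<^sup>2 - y\<^sup>2)" using frac_mono_le[OF b2, of x y] assms by simp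
  hence B: "q * x / sqrt (b\<^sup>2 - x\<^sup>2) \<le> q * y / sqrt (b\<^sup>2 - y\<^sup>2)" using assms(2)
    by (simp add: mult_left_mono times_divide_eq_right[symmetric] del: times_divide_eq_right)
  show ?thesis using A B unfolding hh_def by simp
qed

lemma hh_cont:
  assumes "b \<ge> 1" "c < 1" "0 \<le> c"
  shows "continuous_on {0..c} (hh p q b)"
proof -
  have b2: "b\<^sup>2 \<ge> 1" using assms(1) by (metis one_le_power)
  have s: "1 - s\<^sup>2 > 0 \<and> b\<^sup>2 - s\<^sup>2 > 0" if "s \<in> {0..c}" for s
  proof -
    have "s\<^sup>2 < 1" using that assms by (simp add: power_less_one_iff abs_less_iff)
    thus ?thesis using b2 by simp
  qed
  show ?thesis unfolding hh_def
    by (intro continuous_intros) (auto dest!: s)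
qed

lemma sh_ex1:
  assumes p: "p \<ge> 1" and q: "q \<ge> 0" and b: "b \<ge> 1"
  shows "\<exists>!\<sigma>. 0 < \<sigma> \<and> \<sigma> < 1 \<and>
      p * \<sigma> / sqrt (1 - \<sigma>\<^sup>2) + q * \<sigma> / sqrt (b\<^sup>2 - \<sigma>\<^sup>2) = 1"
proof -
  define c where "c = sqrt (1/2)"
  have c0: "0 < c" "c < 1" unfolding c_def by (auto simp: real_sqrt_lt_1_iff)
  have cc: "1 - c\<^sup>2 = 1/2" unfolding c_def by simp
  have b2: "b\<^sup>2 \<ge> 1" using b by (metis one_le_power)
  have hc: "hh p q b c \<ge> 1"
  proof -
    have "p * c / sqrt (1 - c\<^sup>2) = p" using c0 unfolding cc by (simp add: c_def)
    moreover have "q * c / sqrt (b\<^sup>2 - c\<^sup>2) \<ge> 0" using q c0 cc b2 by (simp add: c_def)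
    ultimately show ?thesis using p unfolding hh_def by simp
  qed
  have h0: "hh p q b 0 = 0" unfolding hh_def by simp
  obtain s where s: "0 \<le> s" "s \<le> c" "hh p q b s = 1"
    using IVT'[of "hh p q b" 0 1 c] hc h0 hh_cont[OF b c0(2)] c0 by auto
  have s0: "s \<noteq> 0" using s h0 by auto
  show ?thesis
  proof (rule ex1I[of _ s])
    show "0 < s \<and> s < 1 \<and> p * s / sqrt (1 - s\<^sup>2) + q * s / sqrt (b\<^sup>2 - s\<^sup>2) = 1"
      using s s0 c0 unfolding hh_def by auto
  next
    fix y assume y: "0 < y \<and> y < 1 \<and> p * y / sqrt (1 - y\<^sup>2) + q * y / sqrt (b\<^sup>2 - y\<^sup>2) = 1"
    hence hy: "hh p q b y = 1" unfolding hh_def by simp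
    show "y = s"
    proof (rule ccontr)
      assume "y \<noteq> s"
      hence "y < s \<or> s < y" by auto
      thus False using hh_mono[of p q b y s] hh_mono[of p q b s y] p q b y s c0 hy by auto
    qed
  qed
qed

lemma sh_spec:
  assumes p: "p \<ge> 1" and q: "q \<ge> 0" and b: "b \<ge> 1"
  shows "0 < sh p q b" "sh p q b < 1" "hh p q b (sh p q b) = 1"
  using theI'[OF sh_ex1[OF assms]] unfolding sh_def[symmetric] hh_def by auto


lemma tangent_sqrt:
  assumes a: "a \<ge> 1" and s: "0 \<le> s" "s \<le> 1" and x: "0 \<le> x" "x \<le> 1"
  shows "sqrt (a - x\<^sup>2) * sqrt (a - s\<^sup>2) \<le> a - s * x"
proof -
  have sx: "s * x \<le> 1" using s x by (metis mult_le_one)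
  have "(a - x\<^sup>2) * (a - s\<^sup>2) \<le> (a - s * x)\<^sup>2"
  proof -
    have "(a - s * x)\<^sup>2 - (a - x\<^sup>2) * (a - s\<^sup>2) = a * (s - x)\<^sup>2"
      by (simp add: power2_eq_square algebra_simps)
    moreover have "a * (s - x)\<^sup>2 \<ge> 0" using a by simp
    ultimately show ?thesis by linarith
  qed
  hence "sqrt ((a - x\<^sup>2) * (a - s\<^sup>2)) \<le> sqrt ((a - s * x)\<^sup>2)" by (rule real_sqrt_le_mono)
  moreover have "\<bar>a - s * x\<bar> = a - s * x" using sx a by simp
  ultimately show ?thesis by (simp add: real_sqrt_mult)
qed

lemma alg_id: "A \<noteq> 0 \<Longrightarrow> B \<noteq> 0 \<Longrightarrow>
  x * (1 - (p * s / A + q * s / B)) + (p / A + c * q / B) = x + p * ((1 - s * x) / A) + q * ((c - s * x) / B)"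
  for A B x p q s c :: real by (simp add: field_simps)

lemma F_tangent:
  assumes p: "p \<ge> 0" and q: "q \<ge> 0" and b: "b \<ge> 1"
    and s: "0 \<le> s" "s < 1" and x: "0 \<le> x" "x \<le> 1"
  shows "Fp p q b x \<le> x * (1 - hh p q b s) + Cc p q b s"
proof -
  have b2: "b\<^sup>2 \<ge> 1" using b by (metis one_le_power)
  have s2: "s\<^sup>2 < 1" using s by (simp add: power_less_one_iff abs_less_iff)
  have A1: "sqrt (1 - s\<^sup>2) > 0" using s2 by simp
  have B1: "sqrt (b\<^sup>2 - s\<^sup>2) > 0" using s2 b2 by simp
  have A: "sqrt (1 - x\<^sup>2) \<le> (1 - s * x) / sqrt (1 - s\<^sup>2)"
    using tangent_sqrt[of 1 s x] s x A1 by (simp add: divide_simps)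
  have B: "sqrt (b\<^sup>2 - x\<^sup>2) \<le> (b\<^sup>2 - s * x) / sqrt (b\<^sup>2 - s\<^sup>2)"
    using tangent_sqrt[of "b\<^sup>2" s x] s x B1 b2 by (simp add: divide_simps)
  have A': "p * sqrt (1 - x\<^sup>2) \<le> p * ((1 - s * x) / sqrt (1 - s\<^sup>2))"
    using A p by (rule mult_left_mono)
  have B': "q * sqrt (b\<^sup>2 - x\<^sup>2) \<le> q * ((b\<^sup>2 - s * x) / sqrt (b\<^sup>2 - s\<^sup>2))"
    using B q by (rule mult_left_mono)
  have eq: "x * (1 - hh p q b s) + Cc p q b s
      = x + p * ((1 - s * x) / sqrt (1 - s\<^sup>2)) + q * ((b\<^sup>2 - s * x) / sqrt (b\<^sup>2 - s\<^sup>2))"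
    unfolding hh_def Cc_def using alg_id[of "sqrt (1 - s\<^sup>2)" "sqrt (b\<^sup>2 - s\<^sup>2)"] A1 B1 by simp
  show ?thesis unfolding eq Fp_def using A' B' by linarith
qed

lemma F_at:
  assumes b: "b \<ge> 1" and s: "0 \<le> s" "s < 1"
  shows "Fp p q b s = s * (1 - hh p q b s) + Cc p q b s"
proof -
  have b2: "b\<^sup>2 \<ge> 1" using b by (metis one_le_power)
  have s2: "s\<^sup>2 < 1" using s by (simp add: power_less_one_iff abs_less_iff)
  have A1: "sqrt (1 - s\<^sup>2) > 0" using s2 by simp
  have B1: "sqrt (b\<^sup>2 - s\<^sup>2) > 0" using s2 b2 by simp
  have a: "(1 - s * s) / sqrt (1 - s\<^sup>2) = sqrt (1 - s\<^sup>2)"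
    using A1 s2 by (simp add: divide_simps power2_eq_square)
  have c: "(b\<^sup>2 - s * s) / sqrt (b\<^sup>2 - s\<^sup>2) = sqrt (b\<^sup>2 - s\<^sup>2)"
    using B1 s2 b2 by (simp add: divide_simps power2_eq_square)
  show ?thesis unfolding Fp_def hh_def Cc_def
    using alg_id[of "sqrt (1 - s\<^sup>2)" "sqrt (b\<^sup>2 - s\<^sup>2)" s p s q "b\<^sup>2"] A1 B1 a c by simp
qed

definition Lg :: "real \<Rightarrow> real \<Rightarrow> real \<Rightarrow> real" where
  "Lg p q b = Cc p q b (sh p q b)"

lemma L_eq_F:
  assumes p: "p \<ge> 1" and q: "q \<ge> 0" and b: "b \<ge> 1"
  shows "Lg p q b = Fp p q b (sh p q b)"
  using F_at[OF b, of "sh p q b" p q] sh_spec[OF assms] unfolding Lg_def by simp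

lemma F_le_L:
  assumes p: "p \<ge> 1" and q: "q \<ge> 0" and b: "b \<ge> 1" and x: "0 \<le> x" "x \<le> 1"
  shows "Fp p q b x \<le> Lg p q b"
  using F_tangent[of p q b "sh p q b" x] sh_spec[OF p q b] assms unfolding Lg_def by simp

lemma L_le_C:
  assumes p: "p \<ge> 1" and q: "q \<ge> 0" and b: "b \<ge> 1" and s: "0 \<le> s" "s < 1"
    and h: "hh p q b s \<ge> 1"
  shows "Lg p q b \<le> Cc p q b s"
proof -
  have "Lg p q b \<le> sh p q b * (1 - hh p q b s) + Cc p q b s"
    using F_tangent[of p q b s "sh p q b"] sh_spec[OF p q b] assms L_eq_F[OF p q b] by simp
  moreover have "sh p q b * (1 - hh p q b s) \<le> 0"
    using sh_spec[OF p q b] h by (simp add: mult_nonneg_nonpos)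
  ultimately show ?thesis by linarith
qed

lemma sh_le:
  assumes p: "p \<ge> 1" and q: "q \<ge> 0" and b: "b \<ge> 1" and s: "0 \<le> s" "s < 1"
    and h: "hh p q b s \<ge> 1"
  shows "sh p q b \<le> s"
proof (rule ccontr)
  assume "\<not> ?thesis"
  hence "hh p q b s < hh p q b (sh p q b)" using hh_mono[of p q b s "sh p q b"] sh_spec[OF p q b] assms by auto
  thus False using sh_spec[OF p q b] h by simp
qed


lemma q0: "q_fun 0 = 0" and p0: "p_fun 0 = 1"
  and q2: "q_fun 2 = 1" and p2: "p_fun 2 = 2"
  and q4: "q_fun 4 = 2" and p4: "p_fun 4 = 3"
  by (simp_all add: q_fun_def p_fun_def)

lemma l_eq: "l_fun t b = Lg (p_fun t) (q_fun t) b - t - sqrt 2"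
  unfolding l_fun_def Lg_def Cc_def sigma_hat_def sh_def by simp

lemma L10: assumes "b \<ge> 1" shows "Lg 1 0 b = sqrt 2"
proof -
  define s where "s = sqrt (1/2)"
  have s0: "0 < s" "s < 1" unfolding s_def by (auto simp: real_sqrt_lt_1_iff)
  have ss: "sqrt (1 - s\<^sup>2) = s" unfolding s_def by simp
  have s2: "s + s = sqrt 2" unfolding s_def by (simp add: real_sqrt_divide) (metis real_sqrt_divide real_div_sqrt field_sum_of_halves zero_le_numeral mult_2 times_divide_eq_left)
  have "Fp 1 0 b s \<le> Lg 1 0 b" using F_le_L[of 1 0 b s] assms s0 by simp
  moreover have "Fp 1 0 b s = sqrt 2" unfolding Fp_def ss using s2 by simp
  moreover have "Lg 1 0 b \<le> Cc 1 0 b s" using L_le_C[of 1 0 b s] assms s0 unfolding hh_def ss by simp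
  moreover have "Cc 1 0 b s = 1 / s" using ss by (simp add: Cc_def)
  moreover have "1 / s = sqrt 2" unfolding s_def by (simp add: real_sqrt_divide)
  ultimately show ?thesis by linarith
qed

lemma delta0: assumes "b \<ge> 1" shows "delta_fun 0 b = Lg 2 1 b - 2 - sqrt 2"
  unfolding delta_fun_def l_eq using L10[OF assms] by (simp add: q0 p0 q2 p2)

lemma delta1: shows "delta_fun 1 b = Lg 3 2 b - Lg 2 1 b - 2"
  unfolding delta_fun_def l_eq by (simp add: q4 p4 q2 p2)


lemma F_mono_b:
  assumes q: "q \<ge> 0" and b: "1 \<le> b" "b \<le> b'" and x: "0 \<le> x" "x \<le> 1"
  shows "Fp p q b x \<le> Fp p q b' x"
proof -
  have "b\<^sup>2 \<le> b'\<^sup>2" using b by (intro power_mono) auto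
  hence "sqrt (b\<^sup>2 - x\<^sup>2) \<le> sqrt (b'\<^sup>2 - x\<^sup>2)" by simp
  thus ?thesis unfolding Fp_def using q by (simp add: mult_left_mono)
qed

lemma F_smono_b:
  assumes q: "q > 0" and b: "1 \<le> b" "b < b'" and x: "0 \<le> x" "x \<le> 1"
  shows "Fp p q b x < Fp p q b' x"
proof -
  have "b\<^sup>2 < b'\<^sup>2" using b by (intro power_strict_mono) auto
  hence "sqrt (b\<^sup>2 - x\<^sup>2) < sqrt (b'\<^sup>2 - x\<^sup>2)" by simp
  thus ?thesis unfolding Fp_def using q by simp
qed

lemma L_smono:
  assumes p: "p \<ge> 1" and q: "q > 0" and b: "1 \<le> b" "b < b'"
  shows "Lg p q b < Lg p q b'"
proof -
  have s: "0 < sh p q b" "sh p q b < 1" using sh_spec[of p q b] assms by auto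
  have "Lg p q b = Fp p q b (sh p q b)" using L_eq_F assms by simp
  also have "\<dots> < Fp p q b' (sh p q b)" using F_smono_b[OF q b, of "sh p q b"] s by simp
  also have "\<dots> \<le> Lg p q b'" using F_le_L[of p q b' "sh p q b"] assms s by simp
  finally show ?thesis .
qed

lemma L_diff_bounds:
  assumes p: "p \<ge> 1" and q: "q \<ge> 0" and b: "1 \<le> b" "b \<le> b'"
  shows "Lg p q b' - Lg p q b \<ge> Fp p q b' (sh p q b) - Fp p q b (sh p q b)"
    and "Lg p q b' - Lg p q b \<le> Fp p q b' (sh p q b') - Fp p q b (sh p q b')"
proof -
  have s: "0 < sh p q b" "sh p q b < 1" using sh_spec[of p q b] assms by auto
  have s': "0 < sh p q b'" "sh p q b' < 1" using sh_spec[of p q b'] assms by auto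
  show "Lg p q b' - Lg p q b \<ge> Fp p q b' (sh p q b) - Fp p q b (sh p q b)"
    using L_eq_F[of p q b] F_le_L[of p q b' "sh p q b"] assms s by simp
  show "Lg p q b' - Lg p q b \<le> Fp p q b' (sh p q b') - Fp p q b (sh p q b')"
    using L_eq_F[of p q b'] F_le_L[of p q b "sh p q b'"] assms s' by simp
qed

lemma F_diff: "Fp p q b' x - Fp p q b x = q * (sqrt (b'\<^sup>2 - x\<^sup>2) - sqrt (b\<^sup>2 - x\<^sup>2))"
  unfolding Fp_def by (simp add: algebra_simps)

lemma L_holder:
  assumes p: "p \<ge> 1" and q: "q \<ge> 0" and b: "1 \<le> b" "b \<le> b'" "b' \<le> 2"
  shows "0 \<le> Lg p q b' - Lg p q b" "Lg p q b' - Lg p q b \<le> 2 * q * sqrt (b' - b)"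
proof -
  have s: "0 < sh p q b" "sh p q b < 1" using sh_spec[of p q b] assms by auto
  show "0 \<le> Lg p q b' - Lg p q b"
    using L_diff_bounds(1)[OF p q b(1,2)] F_mono_b[OF q b(1,2), of "sh p q b" p] s by simp
  define c where "c = sh p q b'"
  have c: "0 < c" "c < 1" using sh_spec[of p q b'] assms unfolding c_def by auto
  have c2: "c\<^sup>2 \<le> 1" using c by (simp add: power_le_one)
  have bb: "1 \<le> b\<^sup>2" "b\<^sup>2 \<le> b'\<^sup>2" using b by (auto intro: power_mono simp: one_le_power)
  have "sqrt (b'\<^sup>2 - c\<^sup>2) = sqrt ((b\<^sup>2 - c\<^sup>2) + (b'\<^sup>2 - b\<^sup>2))" by simp
  also have "\<dots> \<le> sqrt (b\<^sup>2 - c\<^sup>2) + sqrt (b'\<^sup>2 - b\<^sup>2)"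
    by (rule sqrt_add_le_add_sqrt) (use c2 bb in auto)
  finally have A: "sqrt (b'\<^sup>2 - c\<^sup>2) - sqrt (b\<^sup>2 - c\<^sup>2) \<le> sqrt (b'\<^sup>2 - b\<^sup>2)" by simp
  have "b'\<^sup>2 - b\<^sup>2 = (b' - b) * (b' + b)" by (simp add: power2_eq_square algebra_simps)
  also have "\<dots> \<le> (b' - b) * 4" using b by (intro mult_left_mono) auto
  finally have "sqrt (b'\<^sup>2 - b\<^sup>2) \<le> sqrt ((b' - b) * 4)" by simp
  also have "\<dots> = sqrt (b' - b) * sqrt 4" by (rule real_sqrt_mult)
  also have "sqrt (4::real) = 2" by (simp add: real_sqrt_eq_iff[symmetric] flip: real_sqrt_abs[of 2]) 
  hence "sqrt (b' - b) * sqrt 4 = 2 * sqrt (b' - b)" by simp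
  finally have B: "sqrt (b'\<^sup>2 - c\<^sup>2) - sqrt (b\<^sup>2 - c\<^sup>2) \<le> 2 * sqrt (b' - b)" using A by linarith
  have "Lg p q b' - Lg p q b \<le> q * (sqrt (b'\<^sup>2 - c\<^sup>2) - sqrt (b\<^sup>2 - c\<^sup>2))"
    using L_diff_bounds(2)[OF p q b(1,2)] unfolding F_diff c_def .
  also have "\<dots> \<le> q * (2 * sqrt (b' - b))" using B q by (rule mult_left_mono)
  finally show "Lg p q b' - Lg p q b \<le> 2 * q * sqrt (b' - b)" by simp
qed

lemma holder_cont:
  fixes f :: "real \<Rightarrow> real"
  assumes K: "K \<ge> 0" and h: "\<And>x y. x \<in> S \<Longrightarrow> y \<in> S \<Longrightarrow> \<bar>f y - f x\<bar> \<le> K * sqrt \<bar>y - x\<bar>"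
  shows "continuous_on S f"
  unfolding continuous_on_iff
proof (intro ballI allI impI)
  fix x e assume x: "x \<in> S" and e: "(0::real) < e"
  define d where "d = (e / (K + 1))\<^sup>2"
  have d: "d > 0" unfolding d_def using e K by simp
  show "\<exists>d>0. \<forall>x'\<in>S. dist x' x < d \<longrightarrow> dist (f x') (f x) < e"
  proof (intro exI[of _ d] conjI ballI impI d)
    fix y assume y: "y \<in> S" and dy: "dist y x < d"
    have "sqrt \<bar>y - x\<bar> < sqrt d" using dy by (simp add: dist_real_def)
    also have "sqrt d = e / (K + 1)" unfolding d_def using e K by simp
    finally have sq: "sqrt \<bar>y - x\<bar> < e / (K + 1)" .
    have "\<bar>f y - f x\<bar> \<le> K * sqrt \<bar>y - x\<bar>" using h x y .
    also have "\<dots> \<le> (K + 1) * sqrt \<bar>y - x\<bar>" by (simp add: algebra_simps)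
    also have "\<dots> < (K + 1) * (e / (K + 1))" using sq K by (intro mult_strict_left_mono) auto
    also have "\<dots> = e" using K by simp
    finally show "dist (f y) (f x) < e" by (simp add: dist_real_def)
  qed
qed


lemma sqrt_diff_eq:
  assumes "0 \<le> v" "v < u"
  shows "sqrt u - sqrt v = (u - v) / (sqrt u + sqrt v)"
proof -
  have pos: "sqrt u + sqrt v > 0" using assms by (simp add: add_pos_nonneg)
  have "(sqrt u - sqrt v) * (sqrt u + sqrt v) = u - v"
    using assms by (simp add: algebra_simps power2_eq_square[symmetric])
  thus ?thesis using pos by (simp add: divide_simps)
qed

lemma key_ineq:
  assumes b: "1 \<le> b" "b < b'" and a: "0 \<le> a" "a \<le> 1" and c: "0 \<le> c" "c \<le> 1/2"
  shows "sqrt (b'\<^sup>2 - c\<^sup>2) - sqrt (b\<^sup>2 - c\<^sup>2) < 2 * (sqrt (b'\<^sup>2 - a\<^sup>2) - sqrt (b\<^sup>2 - a\<^sup>2))"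
proof -
  have bb: "1 \<le> b\<^sup>2" "b\<^sup>2 < b'\<^sup>2" using b by (auto intro: power_strict_mono simp: one_le_power)
  have a2: "a\<^sup>2 \<le> 1" using a by (simp add: power_le_one)
  have c2: "c\<^sup>2 \<le> 1/4" using c power_mono[of c "1/2" 2] by (simp add: power_divide)
  define D where "D = b'\<^sup>2 - b\<^sup>2"
  have D: "D > 0" using bb unfolding D_def by simp
  define Sa where "Sa = sqrt (b'\<^sup>2 - a\<^sup>2) + sqrt (b\<^sup>2 - a\<^sup>2)"
  define Sc where "Sc = sqrt (b'\<^sup>2 - c\<^sup>2) + sqrt (b\<^sup>2 - c\<^sup>2)"
  have ea: "sqrt (b'\<^sup>2 - a\<^sup>2) - sqrt (b\<^sup>2 - a\<^sup>2) = D / Sa"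
    unfolding Sa_def D_def using sqrt_diff_eq[of "b\<^sup>2 - a\<^sup>2" "b'\<^sup>2 - a\<^sup>2"] bb a2 by simp
  have ec: "sqrt (b'\<^sup>2 - c\<^sup>2) - sqrt (b\<^sup>2 - c\<^sup>2) = D / Sc"
    unfolding Sc_def D_def using sqrt_diff_eq[of "b\<^sup>2 - c\<^sup>2" "b'\<^sup>2 - c\<^sup>2"] bb c2 by simp
  have b0: "0 < b" "0 < b'" using b by auto
  have t1: "sqrt (b'\<^sup>2 - a\<^sup>2) \<le> b'"
    using real_sqrt_le_mono[of "b'\<^sup>2 - a\<^sup>2" "b'\<^sup>2"] b0 by simp
  have t2: "sqrt (b\<^sup>2 - a\<^sup>2) \<le> b"
    using real_sqrt_le_mono[of "b\<^sup>2 - a\<^sup>2" "b\<^sup>2"] b0 by simp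
  have t3: "b' < 2 * sqrt (b'\<^sup>2 - c\<^sup>2)"
  proof -
    have "(b' / 2)\<^sup>2 < b'\<^sup>2 - c\<^sup>2" using bb c2 by (simp add: power_divide)
    hence "b' / 2 < sqrt (b'\<^sup>2 - c\<^sup>2)" by (rule real_less_rsqrt)
    thus ?thesis by simp
  qed
  have t4: "b < 2 * sqrt (b\<^sup>2 - c\<^sup>2)"
  proof -
    have "(b / 2)\<^sup>2 < b\<^sup>2 - c\<^sup>2" using bb c2 by (simp add: power_divide)
    hence "b / 2 < sqrt (b\<^sup>2 - c\<^sup>2)" by (rule real_less_rsqrt)
    thus ?thesis by simp
  qed
  have Sa: "Sa > 0" unfolding Sa_def using bb a2 by (intro add_pos_nonneg) auto
  have SaSc: "Sa < 2 * Sc" unfolding Sa_def Sc_def using t1 t2 t3 t4 by (simp add: distrib_left)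
  have Sc: "Sc > 0" using Sa SaSc by linarith
  have "D / Sc < 2 * (D / Sa)" using SaSc Sa Sc D by (simp add: divide_simps)
  thus ?thesis using ea ec by simp
qed

lemma sh21_le: assumes "b \<ge> 1" shows "sh 2 1 b \<le> 1/2"
proof (rule sh_le)
  have b2: "b\<^sup>2 \<ge> 1" using assms by (metis one_le_power)
  have "sqrt (3/4) < (1::real)" by simp
  hence A: "2 * (1/2) / sqrt (1 - (1/2)\<^sup>2) > (1::real)" by (simp add: power_divide)
  have B: "1 * (1/2) / sqrt (b\<^sup>2 - (1/2)\<^sup>2) \<ge> 0" using b2 by (simp add: power_divide)
  show "1 \<le> hh 2 1 b (1/2)" unfolding hh_def using A B by linarith
qed (use assms in auto)

lemma delta1_smono:
  assumes b: "1 \<le> b" "b < b'"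
  shows "Lg 3 2 b - Lg 2 1 b < Lg 3 2 b' - Lg 2 1 b'"
proof -
  define a where "a = sh 3 2 b"
  define c where "c = sh 2 1 b'"
  have a: "0 < a" "a < 1" using sh_spec[of 3 2 b] b unfolding a_def by auto
  have c: "0 < c" "c \<le> 1/2" using sh_spec[of 2 1 b'] sh21_le[of b'] b unfolding c_def by auto
  have "Lg 3 2 b' - Lg 3 2 b \<ge> 2 * (sqrt (b'\<^sup>2 - a\<^sup>2) - sqrt (b\<^sup>2 - a\<^sup>2))"
    using L_diff_bounds(1)[of 3 2 b b'] b unfolding F_diff a_def by simp
  moreover have "Lg 2 1 b' - Lg 2 1 b \<le> sqrt (b'\<^sup>2 - c\<^sup>2) - sqrt (b\<^sup>2 - c\<^sup>2)"
    using L_diff_bounds(2)[of 2 1 b b'] b unfolding F_diff c_def by simp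
  moreover have "sqrt (b'\<^sup>2 - c\<^sup>2) - sqrt (b\<^sup>2 - c\<^sup>2) < 2 * (sqrt (b'\<^sup>2 - a\<^sup>2) - sqrt (b\<^sup>2 - a\<^sup>2))"
    using key_ineq[OF b, of a c] a c by simp
  ultimately show ?thesis by linarith
qed


lemma sqrt_bnd:
  assumes "0 \<le> lo" "lo\<^sup>2 \<le> x" "x \<le> hi\<^sup>2" "0 \<le> hi"
  shows "lo \<le> sqrt x" "sqrt x \<le> hi"
proof -
  show "lo \<le> sqrt x" using assms by (intro real_le_rsqrt) auto
  have "sqrt x \<le> sqrt (hi\<^sup>2)" using assms by (intro real_sqrt_le_mono)
  thus "sqrt x \<le> hi" using assms by simp
qed

lemma div_bnd:
  fixes lo y hi c :: real
  assumes "0 < lo" "lo \<le> y" "y \<le> hi" "0 \<le> c"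
  shows "c / hi \<le> c / y" "c / y \<le> c / lo"
proof -
  show "c / hi \<le> c / y" using assms by (intro frac_le[of c c y hi]) auto
  show "c / y \<le> c / lo" using assms by (intro frac_le[of c c lo y]) auto
qed

lemma b32: "sqrt (3/2) \<ge> (1::real)" "(sqrt (3/2))\<^sup>2 = (3/2::real)" by auto

lemma sqrt2_bnd: "1.4142 \<le> sqrt (2::real)"
  by (rule sqrt_bnd(1)[where hi=2]; simp add: power2_eq_square)

lemma N1u: "Lg 2 1 (sqrt (3/2)) \<le> 2 / 0.9415 + 3/2 / 1.1774"
proof -
  define s :: real where "s = 337/1000"
  have A: "0.9415 \<le> sqrt (1 - s\<^sup>2)" "sqrt (1 - s\<^sup>2) \<le> 0.9416"
    using sqrt_bnd[of "0.9415" "1 - s\<^sup>2" "0.9416"] by (simp_all add: s_def power2_eq_square)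
  have B: "1.1774 \<le> sqrt (3/2 - s\<^sup>2)" "sqrt (3/2 - s\<^sup>2) \<le> 1.1775"
    using sqrt_bnd[of "1.1774" "3/2 - s\<^sup>2" "1.1775"] by (simp_all add: s_def power2_eq_square)
  have h1: "2 * s / 0.9416 \<le> 2 * s / sqrt (1 - s\<^sup>2)" using div_bnd(1)[of "0.9415" "sqrt (1 - s\<^sup>2)" "0.9416" "2 * s"] A by (simp add: s_def)
  have h2: "1 * s / 1.1775 \<le> 1 * s / sqrt (3/2 - s\<^sup>2)" using div_bnd(1)[of "1.1774" "sqrt (3/2 - s\<^sup>2)" "1.1775" "1 * s"] B by (simp add: s_def)
  have hh: "hh 2 1 (sqrt (3/2)) s \<ge> 1" unfolding hh_def b32(2) using h1 h2 by (simp add: s_def)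
  have c1: "2 / sqrt (1 - s\<^sup>2) \<le> 2 / 0.9415" using div_bnd(2)[of "0.9415" "sqrt (1 - s\<^sup>2)" "0.9416" 2] A by simp
  have c2: "3/2 / sqrt (3/2 - s\<^sup>2) \<le> 3/2 / 1.1774" using div_bnd(2)[of "1.1774" "sqrt (3/2 - s\<^sup>2)" "1.1775" "3/2"] B by simp
  have "Lg 2 1 (sqrt (3/2)) \<le> Cc 2 1 (sqrt (3/2)) s" using L_le_C[of 2 1 "sqrt (3/2)" s] hh b32 by (simp add: s_def)
  also have "\<dots> \<le> 2 / 0.9415 + 3/2 / 1.1774" unfolding Cc_def b32(2) using c1 c2 by simp
  finally show ?thesis .
qed

lemma N1: "Lg 2 1 (sqrt (3/2)) < 2 + sqrt 2"
  using N1u sqrt2_bnd by simp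

lemma sqrt2_ubnd: "sqrt (2::real) \<le> 1.4143"
  by (rule sqrt_bnd(2)[where lo=1]; simp add: power2_eq_square)

lemma N2: "Lg 2 1 (sqrt 2) > 2 + sqrt 2"
proof -
  define x :: real where "x = 0.35"
  have A: "0.9367 \<le> sqrt (1 - x\<^sup>2)"
    using sqrt_bnd[of "0.9367" "1 - x\<^sup>2" 1] by (simp_all add: x_def power2_eq_square)
  have B: "1.3702 \<le> sqrt (2 - x\<^sup>2)"
    using sqrt_bnd[of "1.3702" "2 - x\<^sup>2" 2] by (simp_all add: x_def power2_eq_square)
  have "Fp 2 1 (sqrt 2) x \<le> Lg 2 1 (sqrt 2)" using F_le_L[of 2 1 "sqrt 2" x] by (simp add: x_def)
  moreover have "Fp 2 1 (sqrt 2) x > 2 + sqrt 2" unfolding Fp_def using A B sqrt2_ubnd by (simp add: x_def)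
  ultimately show ?thesis by linarith
qed

lemma N3: "Lg 3 2 1 - Lg 2 1 1 - 2 < 0"
proof -
  define s :: real where "s = 0.197"
  have A: "0.9804 \<le> sqrt (1 - s\<^sup>2)" "sqrt (1 - s\<^sup>2) \<le> 0.9805"
    using sqrt_bnd[of "0.9804" "1 - s\<^sup>2" "0.9805"] by (simp_all add: s_def power2_eq_square)
  have h1: "5 * s / 0.9805 \<le> 5 * s / sqrt (1 - s\<^sup>2)" using div_bnd(1)[of "0.9804" "sqrt (1 - s\<^sup>2)" "0.9805" "5 * s"] A by (simp add: s_def)
  have hh: "hh 3 2 1 s \<ge> 1"
  proof -
    have "hh 3 2 1 s = 5 * s / sqrt (1 - s\<^sup>2)" unfolding hh_def by (simp add: add_divide_distrib[symmetric])
    thus ?thesis using h1 by (simp add: s_def)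
  qed
  have c1: "5 / sqrt (1 - s\<^sup>2) \<le> 5 / 0.9804" using div_bnd(2)[of "0.9804" "sqrt (1 - s\<^sup>2)" "0.9805" 5] A by simp
  have "Lg 3 2 1 \<le> Cc 3 2 1 s" using L_le_C[of 3 2 1 s] hh by (simp add: s_def)
  also have "Cc 3 2 1 s = 5 / sqrt (1 - s\<^sup>2)" unfolding Cc_def by (simp add: add_divide_distrib[symmetric])
  finally have U: "Lg 3 2 1 \<le> 5 / 0.9804" using c1 by linarith
  define x :: real where "x = 0.316"
  have B: "0.9487 \<le> sqrt (1 - x\<^sup>2)"
    using sqrt_bnd[of "0.9487" "1 - x\<^sup>2" 1] by (simp_all add: x_def power2_eq_square)
  have "Fp 2 1 1 x \<le> Lg 2 1 1" using F_le_L[of 2 1 1 x] by (simp add: x_def)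
  moreover have "Fp 2 1 1 x \<ge> x + 3 * 0.9487" unfolding Fp_def using B by simp
  ultimately show ?thesis using U by (simp add: x_def)
qed

lemma N4: "Lg 3 2 (sqrt (3/2)) - Lg 2 1 (sqrt (3/2)) - 2 > 0"
proof -
  define x :: real where "x = 0.2115"
  have A: "0.9773 \<le> sqrt (1 - x\<^sup>2)"
    using sqrt_bnd[of "0.9773" "1 - x\<^sup>2" 1] by (simp_all add: x_def power2_eq_square)
  have B: "1.2063 \<le> sqrt (3/2 - x\<^sup>2)"
    using sqrt_bnd[of "1.2063" "3/2 - x\<^sup>2" 2] by (simp_all add: x_def power2_eq_square)
  have "Fp 3 2 (sqrt (3/2)) x \<le> Lg 3 2 (sqrt (3/2))" using F_le_L[of 3 2 "sqrt (3/2)" x] by (simp add: x_def)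
  moreover have "Fp 3 2 (sqrt (3/2)) x \<ge> x + 3 * 0.9773 + 2 * 1.2063" unfolding Fp_def b32(2) using A B by simp
  ultimately show ?thesis using N1u by (simp add: x_def)
qed

lemma Lg_cont:
  assumes p: "p \<ge> 1" and q: "q \<ge> 0"
  shows "continuous_on {1..2} (Lg p q)"
proof (rule holder_cont[of "2 * q"])
  show "0 \<le> 2 * q" using q by simp
  fix x y :: real assume x: "x \<in> {1..2}" and y: "y \<in> {1..2}"
  show "\<bar>Lg p q y - Lg p q x\<bar> \<le> 2 * q * sqrt \<bar>y - x\<bar>"
  proof (cases "x \<le> y")
    case True
    thus ?thesis using L_holder[OF p q, of x y] x y by simp
  next
    case False
    thus ?thesis using L_holder[OF p q, of y x] x y by simp
  qed
qed

lemma d0_cont: "continuous_on {1..2} (delta_fun 0)"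
proof -
  have "continuous_on {1..2} (\<lambda>b. Lg 2 1 b - 2 - sqrt 2)"
    using Lg_cont[of 2 1] by (intro continuous_intros) auto
  thus ?thesis by (rule continuous_on_cong[THEN iffD1, rotated 2]) (auto simp: delta0)
qed

lemma d1_cont: "continuous_on {1..2} (delta_fun 1)"
proof -
  have "continuous_on {1..2} (\<lambda>b. Lg 3 2 b - Lg 2 1 b - 2)"
    using Lg_cont[of 2 1] Lg_cont[of 3 2] by (intro continuous_intros) auto
  thus ?thesis unfolding delta1 .
qed

lemma s32_bnd: "1 < sqrt (3/2::real)" "sqrt (3/2::real) < sqrt 2" "sqrt (2::real) \<le> 2" "sqrt (3/2::real) \<le> 2"
proof -
  show a: "1 < sqrt (3/2::real)" "sqrt (3/2::real) < sqrt 2" by auto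
  show b: "sqrt (2::real) \<le> 2" by (rule sqrt_bnd(2)[where lo=1]; simp add: power2_eq_square)
  show "sqrt (3/2::real) \<le> 2" using a b by linarith
qed

lemma bc0: "sqrt (3/2) < beta_c 0"
proof -
  have "continuous_on {sqrt (3/2)..sqrt 2} (delta_fun 0)"
    using d0_cont by (rule continuous_on_subset) (use s32_bnd in auto)
  moreover have "delta_fun 0 (sqrt (3/2)) < 0" using N1 delta0[of "sqrt (3/2)"] by simp
  moreover have "delta_fun 0 (sqrt 2) > 0" using N2 delta0[of "sqrt 2"] by simp
  ultimately obtain r where r: "sqrt (3/2) \<le> r" "r \<le> sqrt 2" "delta_fun 0 r = 0"
    using IVT'[of "delta_fun 0" "sqrt (3/2)" 0 "sqrt 2"] s32_bnd by force
  have r1: "sqrt (3/2) \<noteq> r" "r \<noteq> sqrt 2" using r \<open>delta_fun 0 (sqrt (3/2)) < 0\<close> \<open>delta_fun 0 (sqrt 2) > 0\<close> by auto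
  have eq: "beta_c 0 = r" unfolding beta_c_def
  proof (rule the_equality)
    have "1 < r" using r(1) s32_bnd(1) by linarith
    moreover have "r < sqrt 2" using r(2) r1(2) by linarith
    ultimately show "1 < r \<and> r < sqrt 2 \<and> delta_fun 0 r = 0" using r by auto
  next
    fix y assume y: "1 < y \<and> y < sqrt 2 \<and> delta_fun 0 y = 0"
    have r1': "1 \<le> r" using r(1) s32_bnd(1) by linarith
    show "y = r"
    proof (rule ccontr)
      assume "y \<noteq> r"
      hence "y < r \<or> r < y" by auto
      thus False using L_smono[of 2 1 y r] L_smono[of 2 1 r y] y r r1' delta0[of y] delta0[of r] by auto
    qed
  qed
  show ?thesis using eq r r1 by auto
qed

lemma bc1: "beta_c 1 < sqrt (3/2)"
proof -
  have "continuous_on {1..sqrt (3/2)} (delta_fun 1)"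
    using d1_cont by (rule continuous_on_subset) (use s32_bnd in auto)
  moreover have "delta_fun 1 1 < 0" using N3 delta1[of 1] by simp
  moreover have "delta_fun 1 (sqrt (3/2)) > 0" using N4 delta1[of "sqrt (3/2)"] by simp
  ultimately obtain r where r: "1 \<le> r" "r \<le> sqrt (3/2)" "delta_fun 1 r = 0"
    using IVT'[of "delta_fun 1" 1 0 "sqrt (3/2)"] s32_bnd by force
  have r1: "1 \<noteq> r" "r \<noteq> sqrt (3/2)" using r \<open>delta_fun 1 1 < 0\<close> \<open>delta_fun 1 (sqrt (3/2)) > 0\<close> by auto
  have eq: "beta_c 1 = r" unfolding beta_c_def
  proof (rule the_equality)
    have "1 < r" using r(1) r1(1) by linarith
    moreover have "r < sqrt 2" using r(2) s32_bnd(2) by linarith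
    ultimately show "1 < r \<and> r < sqrt 2 \<and> delta_fun 1 r = 0" using r by auto
  next
    fix y assume y: "1 < y \<and> y < sqrt 2 \<and> delta_fun 1 y = 0"
    show "y = r"
    proof (rule ccontr)
      assume "y \<noteq> r"
      hence "y < r \<or> r < y" by auto
      thus False using delta1_smono[of y r] delta1_smono[of r y] y r delta1[of y] delta1[of r] by auto
    qed
  qed
  show ?thesis using eq r r1 by auto
qed

theorem lemma3p14:
  shows "beta_c 1 < sqrt (3/2) \<and> sqrt (3/2) < beta_c 0"
  using bc0 bc1 by simp

end
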